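(* Let $\xi(s)=\pi^{-s/2}\Gamma(s/2)\zeta(s)$, $\chi(s)=s(s-1)\xi(s)$, $A=\pi/3-1$, and \[ Z(s) = (s-1)(As-A+1)\, \chi(s+1) \chi(2s) - (s-2)\, \chi(s) \chi(2s) - s (As-1)\, \chi(s-1) \chi(2s-1) - (s+1)\, \chi(s) \chi(2s-1). \] Then $Z(s)$ has no zero in the half-plane $\Re(s)\geq 20$. *)

theory Defs
  imports "HOL-Analysis.Analysis"
begin

text \<open>This agrees with the
  Riemann zeta function on the half-plane Re s > 1, which is the only region
  where it is used below (all arguments have real part at least 19).\<close>
definition zeta_dir :: "complex \<Rightarrow> complex" where
  "zeta_dir s = (\<Sum>n. 1 / (of_nat (Suc n)) powr s)"

definition xi_fun :: "complex \<Rightarrow> complex" where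
  "xi_fun s = (complex_of_real pi) powr (- s / 2) * Gamma (s / 2) * zeta_dir s"

definition chi_fun :: "complex \<Rightarrow> complex" where
  "chi_fun s = s * (s - 1) * xi_fun s"

definition A_const :: complex where
  "A_const = complex_of_real (pi / 3 - 1)"

definition Z_fun :: "complex \<Rightarrow> complex" where
  "Z_fun s =
     (s - 1) * (A_const * s - A_const + 1) * chi_fun (s + 1) * chi_fun (2 * s)
   - (s - 2) * chi_fun s * chi_fun (2 * s)
   - s * (A_const * s - 1) * chi_fun (s - 1) * chi_fun (2 * s - 1)
   - (s + 1) * chi_fun s * chi_fun (2 * s - 1)"

end

theory Submission
  imports Defs
begin


lemma factor_bound:
  fixes z :: complex and y :: real
  assumes "Re z = y" "y \<ge> 1"
  shows "norm (z * (z + 1) / (z + 1/2)^2 - 1) \<le> 1/(4*y) - 1/(4*(y+1))"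
proof -
  have ne: "z + 1/2 \<noteq> 0" using assms by (auto simp: complex_eq_iff)
  have eq: "z * (z + 1) / (z + 1/2)^2 - 1 = - (1/4) / (z + 1/2)^2"
  proof -
    have A: "(z + 1/2)^2 \<noteq> 0" using ne by simp
    have "z * (z + 1) = (z + 1/2)^2 - 1/4" by (simp add: power2_eq_square algebra_simps)
    hence "z * (z + 1) / (z + 1/2)^2 = 1 - (1/4) / (z + 1/2)^2"
      using A by (simp add: diff_divide_distrib)
    thus ?thesis by simp
  qed
  have "y + 1/2 \<le> norm (z + 1/2)"
    using complex_Re_le_cmod[of "z+1/2"] assms by simp
  hence sq: "(y+1/2)^2 \<le> norm (z+1/2)^2"
    using assms by (intro power_mono) auto
  have "norm (z * (z + 1) / (z + 1/2)^2 - 1) = (1/4) / norm (z+1/2)^2"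
    unfolding eq by (simp add: norm_divide norm_power)
  also have "\<dots> \<le> (1/4) / (y+1/2)^2"
    using sq assms ne by (intro divide_left_mono mult_pos_pos) auto
  also have "\<dots> \<le> (1/4) / (y*(y+1))"
  proof (rule divide_left_mono)
    show "y*(y+1) \<le> (y+1/2)^2" by (simp add: power2_eq_square algebra_simps)
    show "0 < (y+1/2)^2 * (y*(y+1))" using assms by (intro mult_pos_pos) auto
  qed simp
  also have "\<dots> = 1/(4*y) - 1/(4*(y+1))"
    using assms by (simp add: field_simps)
  finally show ?thesis .
qed

lemma tele_aux: "(a::real) > 0 \<Longrightarrow> 1/(4*a) - 1/(4*(a+1)) = 1/(4*(a*(a+1)))"
  by (simp add: field_simps)

lemma prod_bounds:
  fixes z :: complex and x :: real
  assumes "Re z = x" "x \<ge> 1"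
  defines "L \<equiv> \<lambda>n::nat. 1 - 1/(4*x) + 1/(4*(x + real n))"
  shows "L n \<le> norm (\<Prod>k<n. (z + of_nat k) * ((z + of_nat k) + 1) / ((z + of_nat k) + 1/2)^2)
         \<and> norm (\<Prod>k<n. (z + of_nat k) * ((z + of_nat k) + 1) / ((z + of_nat k) + 1/2)^2) \<le> 1 / L n"
proof (induction n)
  case 0
  then show ?case using assms by (simp add: L_def)
next
  case (Suc n)
  define P where "P = norm (\<Prod>k<n. (z + of_nat k) * ((z + of_nat k) + 1) / ((z + of_nat k) + 1/2)^2)"
  define F where "F = norm ((z + of_nat n) * ((z + of_nat n) + 1) / ((z + of_nat n) + 1/2)^2)"
  define e where "e = 1/(4*(x+n)) - 1/(4*(x+n+1))"
  have fb: "norm ((z + of_nat n) * ((z + of_nat n) + 1) / ((z + of_nat n) + 1/2)^2 - 1) \<le> e"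
    unfolding e_def using factor_bound[of "z + of_nat n" "x + n"] assms by simp
  have F1: "1 - e \<le> F" using fb norm_triangle_ineq2[of 1 "(z + of_nat n) * ((z + of_nat n) + 1) / ((z + of_nat n) + 1/2)^2"]
    norm_minus_commute[of 1 "(z + of_nat n) * ((z + of_nat n) + 1) / ((z + of_nat n) + 1/2)^2"]
    unfolding F_def by simp
  have F2: "F \<le> 1 + e" using fb norm_triangle_ineq[of "(z + of_nat n) * ((z + of_nat n) + 1) / ((z + of_nat n) + 1/2)^2 - 1" 1]
    unfolding F_def by simp
  have p1: "x + n > 0" "x + n + 1 > 0" using assms(2) by auto
  have ee: "e = 1/(4*((x+n)*(x+n+1)))" unfolding e_def using tele_aux[OF p1(1)]
    by (simp add: add.assoc)
  have m2: "(x+n)*(x+n+1) \<ge> 1*2" using assms(2) by (intro mult_mono) auto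
  have e0: "0 \<le> e" "e \<le> 1/8" unfolding ee using m2 p1 by (auto simp: field_simps)
  have Ln: "L (Suc n) = L n - e" unfolding L_def e_def by (simp add: algebra_simps)
  have q1: "1/(4*(x+n)) \<le> 1/(4*x)" using assms(2) by (intro divide_left_mono) auto
  have q2: "1/(4*x) \<le> 1/4" using assms(2) by (simp add: field_simps)
  have q3: "0 \<le> 1/(4*(x+Suc n))" using assms(2) by simp
  have L1: "L n \<le> 1" using q1 unfolding L_def by linarith
  have Lc: "L (Suc n) \<ge> 3/4" using q2 q3 unfolding L_def by linarith
  have IH: "L n \<le> P" "P \<le> 1 / L n" using Suc.IH unfolding P_def by auto
  have prodeq: "norm (\<Prod>k<Suc n. (z + of_nat k) * ((z + of_nat k) + 1) / ((z + of_nat k) + 1/2)^2) = P * F"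
    unfolding P_def F_def by (simp only: prod.lessThan_Suc norm_mult)
  have Lpos: "L n > 0" using Lc Ln e0 by linarith
  have "L n - e \<le> L n * (1 - e)" using L1 e0 by (simp add: algebra_simps mult_left_le)
  also have "\<dots> \<le> P * F" using IH F1 Lpos e0 by (intro mult_mono) auto
  finally have lo: "L (Suc n) \<le> P * F" using Ln by simp
  have "P * F \<le> (1 / L n) * (1 + e)" using IH F2 Lpos e0 F_def by (intro mult_mono) auto
  also have "\<dots> \<le> 1 / (L n - e)"
  proof -
    have a: "e * L n \<le> e" using L1 e0 by (simp add: mult_left_le)
    have b: "0 \<le> e*e" by simp
    have "(1 + e) * (L n - e) = L n + (e * L n - e - e*e)" by (simp add: algebra_simps)
    also have "\<dots> \<le> L n" using a b by linarith
    finally have "(1 + e) * (L n - e) \<le> L n" .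
    thus ?thesis using Lpos Lc Ln by (simp add: field_simps)
  qed
  finally have hi: "P * F \<le> 1 / L (Suc n)" using Ln by simp
  show ?case using lo hi prodeq by simp
qed

lemma cancel_aux: "(W::complex) \<noteq> 0 \<Longrightarrow> z * (P * (a / W^2)) * (Q * W)^2 = z * P * Q^2 * a"
  by (simp add: field_simps power2_eq_square)

lemma poch_ident:
  fixes z :: complex
  assumes "Re z > 0"
  shows "pochhammer z n ^ 2 * (z + of_nat n) =
     z * (\<Prod>k<n. (z + of_nat k) * ((z + of_nat k) + 1) / ((z + of_nat k) + 1/2)^2) * pochhammer (z + 1/2) n ^ 2"
proof (induction n)
  case 0
  then show ?case by simp
next
  case (Suc n)
  have ne: "z + of_nat n + 1/2 \<noteq> 0" using assms by (auto simp: complex_eq_iff)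
  define P where "P = (\<Prod>k<n. (z + of_nat k) * ((z + of_nat k) + 1) / ((z + of_nat k) + 1/2)^2)"
  have "pochhammer z (Suc n) ^ 2 * (z + of_nat (Suc n)) =
        (pochhammer z n ^ 2 * (z + of_nat n)) * ((z + of_nat n) * (z + of_nat n + 1))"
    by (simp add: pochhammer_rec' power2_eq_square algebra_simps)
  also have "\<dots> = z * P * pochhammer (z + 1/2) n ^ 2 * ((z + of_nat n) * (z + of_nat n + 1))"
    using Suc.IH P_def by simp
  also have "\<dots> = z * (P * ((z + of_nat n) * ((z + of_nat n) + 1) / ((z + of_nat n) + 1/2)^2))
         * (pochhammer (z + 1/2) n * (z + 1/2 + of_nat n))^2"
    using cancel_aux[of "z + 1/2 + of_nat n" z P "(z + of_nat n) * ((z + of_nat n) + 1)" "pochhammer (z + 1/2) n"] ne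
    by (simp add: add_ac)
  also have "\<dots> = z * (\<Prod>k<Suc n. (z + of_nat k) * ((z + of_nat k) + 1) / ((z + of_nat k) + 1/2)^2)
         * pochhammer (z + 1/2) (Suc n) ^ 2"
    by (simp add: P_def pochhammer_rec' mult.commute)
  finally show ?case .
qed

lemma alg1:
  fixes F E e N Pz Ph z W Pn :: complex
  assumes "F \<noteq> 0" "E \<noteq> 0" "Pz \<noteq> 0" "Ph \<noteq> 0" "z \<noteq> 0" "W \<noteq> 0"
    "e^2 = N" "Pz^2 * W = z * Pn * Ph^2"
  shows "(F * (E * e) / Ph)^2 / ((F * E / Pz)^2 * z) = N * Pn / W"
proof -
  have "(F * (E * e) / Ph)^2 / ((F * E / Pz)^2 * z) = e^2 * Pz^2 / (Ph^2 * z)"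
    using assms by (simp add: field_simps power2_eq_square)
  also have "\<dots> = N * (Pz^2 * W) / (Ph^2 * z * W)" using assms by (simp add: field_simps)
  also have "\<dots> = N * Pn / W" using assms by (simp add: field_simps power2_eq_square)
  finally show ?thesis .
qed

lemma gs_ident:
  fixes z :: complex
  assumes "Re z > 0" "n > 0"
  shows "Gamma_series (z + 1/2) n ^ 2 / (Gamma_series z n ^ 2 * z) =
    of_nat n * (\<Prod>k<Suc n. (z + of_nat k) * ((z + of_nat k) + 1) / ((z + of_nat k) + 1/2)^2) / (z + of_nat n + 1)"
proof -
  define l where "l = (of_real (ln (real n)) :: complex)"
  have ex: "exp ((z + 1/2) * l) = exp (z * l) * exp (l / 2)"
    by (simp add: algebra_simps exp_add[symmetric])
  have e2: "exp (l/2) ^ 2 = of_nat n"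
  proof -
    have "exp (l/2) ^ 2 = exp l" by (simp add: power2_eq_square exp_add[symmetric])
    also have "\<dots> = of_nat n" using assms(2) by (simp add: l_def exp_of_real)
    finally show ?thesis .
  qed
  have pz: "pochhammer z (n+1) \<noteq> 0"
  proof
    assume "pochhammer z (n+1) = 0"
    then obtain k where "z = - of_nat k" unfolding pochhammer_eq_0_iff by blast
    thus False using assms(1) by simp
  qed
  have ph: "pochhammer (z + 1/2) (n+1) \<noteq> 0"
  proof
    assume "pochhammer (z+1/2) (n+1) = 0"
    then obtain k where "z + 1/2 = - of_nat k" unfolding pochhammer_eq_0_iff by blast
    hence "Re (z + 1/2) = - real k" by simp
    thus False using assms(1) by simp
  qed
  have z0: "z \<noteq> 0" using assms(1) by auto
  have W0: "z + of_nat n + 1 \<noteq> 0" using assms(1) by (auto simp: complex_eq_iff)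
  have pid: "pochhammer z (n+1) ^ 2 * (z + of_nat n + 1) = z * (\<Prod>k<Suc n. (z + of_nat k) * ((z + of_nat k) + 1) / ((z + of_nat k) + 1/2)^2) * pochhammer (z + 1/2) (n+1) ^ 2"
    using poch_ident[OF assms(1), of "Suc n"] by (simp add: add_ac)
  show ?thesis
    unfolding Gamma_series_def l_def[symmetric] ex
    by (rule alg1[OF _ _ pz ph z0 W0 e2 pid]) auto
qed

lemma Gamma_ne0_Re: "Re (w::complex) > 0 \<Longrightarrow> Gamma w \<noteq> 0"
proof (rule Gamma_nonzero)
  assume "Re w > 0"
  show "w \<notin> \<int>\<^sub>\<le>\<^sub>0"
  proof
    assume "w \<in> \<int>\<^sub>\<le>\<^sub>0"
    then obtain k where "w = - of_nat k" by (elim nonpos_Ints_cases')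
    thus False using \<open>Re w > 0\<close> by simp
  qed
qed

lemma gamma_ratio:
  fixes z :: complex
  assumes "Re z \<ge> 1"
  shows "(1 - 1/(4*Re z)) * norm z \<le> norm (Gamma (z + 1/2) / Gamma z) ^ 2"
    and "norm (Gamma (z + 1/2) / Gamma z) ^ 2 \<le> norm z / (1 - 1/(4*Re z))"
proof -
  define x where "x = Re z"
  define c where "c = 1 - 1/(4*x)"
  have x1: "x \<ge> 1" using assms x_def by simp
  have c34: "c \<ge> 3/4" "c \<le> 1" using x1 unfolding c_def by (auto simp: field_simps)
  have G0: "Gamma z \<noteq> 0" using assms by (intro Gamma_ne0_Re) auto
  have z0: "z \<noteq> 0" using assms by auto
  have nz: "norm z > 0" using z0 by simp
  define Q where "Q = (\<lambda>n. Gamma_series (z + 1/2) n ^ 2 / (Gamma_series z n ^ 2 * z))"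
  have lim: "Q \<longlonglongrightarrow> Gamma (z + 1/2) ^ 2 / (Gamma z ^ 2 * z)"
    unfolding Q_def using G0 z0 by (intro tendsto_intros) auto
  hence liml: "(\<lambda>n. norm (Q n)) \<longlonglongrightarrow> norm (Gamma (z + 1/2) / Gamma z) ^ 2 / norm z"
    by (intro tendsto_eq_intros) (auto simp: norm_divide norm_mult norm_power power_divide)
  define PP where "PP = (\<lambda>n. (\<Prod>k<n. (z + of_nat k) * ((z + of_nat k) + 1) / ((z + of_nat k) + 1/2)^2))"
  have Qn: "norm (Q n) = real n * norm (PP (Suc n)) / norm (z + of_nat n + 1)" if "n > 0" for n
    unfolding Q_def PP_def using gs_ident[of z n] that assms by (simp add: norm_divide norm_mult)
  have Pb: "c \<le> norm (PP n) \<and> norm (PP n) \<le> 1/c" for n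
  proof -
    have h: "1 - 1/(4*x) + 1/(4*(x + real n)) \<le> norm (PP n) \<and> norm (PP n) \<le> 1 / (1 - 1/(4*x) + 1/(4*(x + real n)))"
      unfolding PP_def using prod_bounds[of z x n] x_def x1 by simp
    have q: "0 \<le> 1/(4*(x + real n))" using x1 by simp
    have cle: "c \<le> 1 - 1/(4*x) + 1/(4*(x + real n))" using q unfolding c_def by linarith
    have "1/(1 - 1/(4*x) + 1/(4*(x + real n))) \<le> 1/c"
      using cle c34 by (intro divide_left_mono mult_pos_pos) auto
    thus ?thesis using h q unfolding c_def by linarith
  qed
  have nn: "real n \<le> norm (z + of_nat n + 1)" for n
  proof -
    have "Re (z + of_nat n + 1) \<le> norm (z + of_nat n + 1)" by (rule complex_Re_le_cmod)
    thus ?thesis using x1 x_def by simp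
  qed
  have nn2: "norm (z + of_nat n + 1) \<le> norm z + real n + 1" for n
    using norm_triangle_ineq[of "z + of_nat n" 1] norm_triangle_ineq[of z "of_nat n"] by simp
  have up: "eventually (\<lambda>n. norm (Q n) \<le> 1/c) sequentially"
    using eventually_gt_at_top[of 0]
  proof eventually_elim
    case (elim n)
    have pos: "norm (z + of_nat n + 1) > 0" using nn[of n] elim by linarith
    have "norm (Q n) = (real n / norm (z + of_nat n + 1)) * norm (PP (Suc n))"
      using Qn[OF elim] by simp
    also have "\<dots> \<le> 1 * (1/c)"
      using Pb[of "Suc n"] nn[of n] pos by (intro mult_mono) (auto simp: field_simps)
    finally show ?case by simp
  qed
  have lo: "eventually (\<lambda>n. c / (1 + (norm z + 1) * (1 / real n)) \<le> norm (Q n)) sequentially"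
    using eventually_gt_at_top[of 0]
  proof eventually_elim
    case (elim n)
    have pos: "norm (z + of_nat n + 1) > 0" using nn[of n] elim by linarith
    have "c / (1 + (norm z + 1) * (1 / real n)) = (real n / (norm z + real n + 1)) * c"
      using elim by (simp add: field_simps)
    also have "\<dots> \<le> (real n / norm (z + of_nat n + 1)) * norm (PP (Suc n))"
    proof (intro mult_mono divide_left_mono)
      show "0 < (norm z + real n + 1) * norm (z + of_nat n + 1)"
        using pos norm_ge_zero[of z] by (intro mult_pos_pos) linarith+
    qed (use Pb[of "Suc n"] nn2[of n] pos c34 in auto)
    also have "\<dots> = norm (Q n)" using Qn[OF elim] by simp
    finally show ?case .
  qed
  have limc: "(\<lambda>n. c / (1 + (norm z + 1) * (1 / real n))) \<longlonglongrightarrow> c / (1 + (norm z + 1) * 0)"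
    by (intro tendsto_intros lim_1_over_n) auto
  have A1: "c \<le> norm (Gamma (z + 1/2) / Gamma z) ^ 2 / norm z"
    using tendsto_le[OF _ liml limc lo] by simp
  have A2: "norm (Gamma (z + 1/2) / Gamma z) ^ 2 / norm z \<le> 1/c"
    using tendsto_le[OF _ tendsto_const liml up] by simp
  show "(1 - 1/(4*Re z)) * norm z \<le> norm (Gamma (z + 1/2) / Gamma z) ^ 2"
    using A1 nz unfolding c_def x_def by (simp add: field_simps)
  show "norm (Gamma (z + 1/2) / Gamma z) ^ 2 \<le> norm z / (1 - 1/(4*Re z))"
    using A2 nz c34 unfolding c_def x_def by (simp add: field_simps)
qed


lemma zeta_term_bound:
  fixes w :: complex
  assumes "Re w \<ge> 19"
  shows "norm (1 / (of_nat (Suc (Suc n))) powr w) \<le> (1/2^17) * (1/real (Suc n) - 1/real (Suc (Suc n)))"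
proof -
  define m where "m = real (Suc (Suc n))"
  have m2: "m \<ge> 2" unfolding m_def by simp
  have nrm: "norm (1 / (of_nat (Suc (Suc n)) :: complex) powr w) = 1 / m powr Re w"
    unfolding m_def by (simp add: norm_divide norm_powr_real_powr)
  have "m powr 19 \<le> m powr Re w" using assms m2 by (intro powr_mono) auto
  moreover have "m powr 19 = m ^ 19"
  proof -
    have "m powr (real (19::nat)) = m ^ 19" by (rule powr_realpow) (use m2 in linarith)
    thus ?thesis by simp
  qed
  moreover have "m ^ 19 = m^2 * m^17" by (simp only: power_add[symmetric]) simp
  moreover have p17: "m^17 \<ge> 2^17" using m2 by (intro power_mono) auto
  moreover have p2: "m^2 \<ge> real (Suc n) * real (Suc (Suc n))" unfolding m_def by (simp add: power2_eq_square)
  moreover have "real (Suc n) * real (Suc (Suc n)) * 2^17 \<le> m^2 * m^17"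
    using p17 p2 by (intro mult_mono) auto
  ultimately have big: "m powr Re w \<ge> real (Suc n) * real (Suc (Suc n)) * 2^17"
    by linarith
  have "1 / m powr Re w \<le> 1 / (real (Suc n) * real (Suc (Suc n)) * 2^17)"
  proof (rule divide_left_mono)
    have a: "0 < real (Suc n) * real (Suc (Suc n)) * 2^17" by simp
    have b: "0 < m powr Re w" using a big by linarith
    show "0 < m powr Re w * (real (Suc n) * real (Suc (Suc n)) * 2^17)"
      by (rule mult_pos_pos[OF b a])
  qed (use big in auto)
  also have "\<dots> = (1/2^17) * (1/real (Suc n) - 1/real (Suc (Suc n)))"
    by (simp add: field_simps)
  finally show ?thesis using nrm by simp
qed

lemma zeta_bound:
  fixes w :: complex
  assumes "Re w \<ge> 19"
  shows "norm (zeta_dir w - 1) \<le> 1/2^17"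
proof -
  define f where "f = (\<lambda>n. 1 / (of_nat (Suc n) :: complex) powr w)"
  define b where "b = (\<lambda>n. (1/2^17) * (1/real (Suc n) - 1/real (Suc (Suc n))))"
  have bs: "b sums ((1/2^17) * (1 - 0))"
  proof -
    have "(\<lambda>n. 1/real (Suc n)) \<longlonglongrightarrow> 0"
      using LIMSEQ_inverse_real_of_nat by (simp add: inverse_eq_divide)
    from telescope_sums'[OF this] have "(\<lambda>n. 1/real (Suc n) - 1/real (Suc (Suc n))) sums (1 - 0)" by simp
    thus ?thesis unfolding b_def by (rule sums_mult)
  qed
  have fb: "norm (f (Suc n)) \<le> b n" for n unfolding f_def b_def using zeta_term_bound[OF assms] .
  have sb: "summable b" using bs by (simp add: sums_iff)
  have sn: "summable (\<lambda>n. norm (f (Suc n)))"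
    by (rule summable_comparison_test'[OF sb]) (simp add: fb)
  have s1: "summable (\<lambda>n. f (Suc n))" by (rule summable_norm_cancel[OF sn])
  have s: "summable f" using s1 by (simp only: summable_Suc_iff)
  have f0: "f 0 = 1" unfolding f_def by simp
  have zd: "zeta_dir w = suminf f" unfolding zeta_dir_def f_def ..
  have "zeta_dir w - 1 = (\<Sum>n. f (Suc n))"
    unfolding suminf_split_head[OF s] zd f0 ..
  hence "norm (zeta_dir w - 1) \<le> (\<Sum>n. norm (f (Suc n)))" using summable_norm[OF sn] by simp
  also have "\<dots> \<le> suminf b" by (rule suminf_le[OF fb sn sb])
  also have "\<dots> = 1/2^17" using sums_unique[OF bs] by simp
  finally show ?thesis .
qed



lemma final_ineq:
  fixes u n1 n3 sp sm1 sm2 rho th z1 z2 z0 zm z2m k pp :: real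
  assumes u: "u \<ge> 20"
    and n1: "n1 \<ge> (0.0471*u + 1.89)/2" and n3: "0 \<le> n3" "n3 \<le> 0.0472*u"
    and sp: "u \<le> sp" "sp \<le> u+1" and sm1: "0 \<le> sm1" "sm1 \<le> u" and sm2: "0 \<le> sm2" "sm2 \<le> u"
    and rho: "rho > 0" "rho^2 \<ge> 39/80*u" "rho \<le> 0.161*u"
    and th: "th \<ge> 0" "rho*th \<le> 3/4"
    and z: "z1 \<ge> 0.99" "z2 \<ge> 0.99" "z2 \<le> 1.01" "0 \<le> z0" "z0 \<le> 1.01" "0 \<le> zm" "zm \<le> 1.01" "0 \<le> z2m" "z2m \<le> 1.01"
    and k: "k \<ge> 1.772" "k \<le> 1.7725" and pp: "0 \<le> pp" "pp \<le> 3.1416"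
  shows "sm2*u*z0*z2 + 2*pp*n3* sm2*rho*th*zm*z2m + k* sp* sm1*th*z0*z2m < n1* sp*u*rho*z1*z2/k"
proof -
  have u0: "u \<ge> 0" using u by simp
  have T2: "sm2*u*z0*z2*rho \<le> u*u*1.01*1.01*(0.161*u)"
    using sm2 u0 z rho by (intro mult_mono) auto
  have T3: "(2*pp*n3* sm2*rho*th*zm*z2m)*rho = 2*pp*n3* sm2*(rho*th)*zm*z2m*rho" by (simp add: algebra_simps)
  have T3b: "2*pp*n3* sm2*(rho*th)*zm*z2m*rho \<le> 2*3.1416*(0.0472*u)*u*(3/4)*1.01*1.01*(0.161*u)"
    using pp n3 sm2 rho th z u0 by (intro mult_mono) (auto simp: mult_nonneg_nonneg)
  have T4: "(k* sp* sm1*th*z0*z2m)*rho = k* sp* sm1*(rho*th)*z0*z2m" by (simp add: algebra_simps)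
  have T4b: "k* sp* sm1*(rho*th)*z0*z2m \<le> 1.7725*(u+1)*u*(3/4)*1.01*1.01"
    using k sp sm1 rho th z u0 by (intro mult_mono) (auto simp: mult_nonneg_nonneg)
  have L: "(n1* sp*u*rho*z1*z2/k)*rho = n1* sp*u*rho^2*z1*z2/k" by (simp add: power2_eq_square algebra_simps)
  have Lb0: "(0.0471*u + 1.89)/2*u*u*(39/80*u)*0.99*0.99 \<le> n1* sp*u*rho^2*z1*z2"
    using n1 sp rho z u0 by (intro mult_mono) auto
  have X0: "0 \<le> (0.0471*u + 1.89)/2*u*u*(39/80*u)*0.99*0.99" using u0 by simp
  have Lb: "(0.0471*u + 1.89)/2*u*u*(39/80*u)*0.99*0.99/1.7725 \<le> n1* sp*u*rho^2*z1*z2/k"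
    by (rule frac_le) (use order_trans[OF X0 Lb0] Lb0 k in auto)
  have poly: "u*u*1.01*1.01*(0.161*u) + 2*3.1416*(0.0472*u)*u*(3/4)*1.01*1.01*(0.161*u) + 1.7725*(u+1)*u*(3/4)*1.01*1.01
     < (0.0471*u + 1.89)/2*u*u*(39/80*u)*0.99*0.99/1.7725"
  proof -
    have a: "u*u*20 \<le> u*u*u" using u u0 by (intro mult_left_mono) auto
    have b: "u*400 \<le> u*u*u"
    proof -
      have "u*400 \<le> u*u*20" using u u0 by (simp add: mult_left_mono)
      thus ?thesis using a by linarith
    qed
    have c: "u*u*u*20 \<le> u*u*u*u" using u u0 by (intro mult_left_mono) auto
    have p: "0 < u*u*u" using u by simp
    define U2 where "U2 = u*u"
    define U3 where "U3 = u*u*u"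
    define U4 where "U4 = u*u*u*u"
    have e1: "u*u*1.01*1.01*(0.161*u) + 2*3.1416*(0.0472*u)*u*(3/4)*1.01*1.01*(0.161*u) + 1.7725*(u+1)*u*(3/4)*1.01*1.01
      = (1.01*1.01*0.161 + 2*3.1416*0.0472*(3/4)*1.01*1.01*0.161) * U3 + (1.7725*(3/4)*1.01*1.01) * (U2 + u)"
      unfolding U2_def U3_def by (simp add: algebra_simps)
    have e2: "(0.0471*u + 1.89)/2*u*u*(39/80*u)*0.99*0.99/1.7725
      = (0.0471/2*(39/80)*0.99*0.99/1.7725) * U4 + (1.89/2*(39/80)*0.99*0.99/1.7725) * U3"
      unfolding U4_def U3_def by (simp add: algebra_simps)
    have a': "U2*20 \<le> U3" "u*400 \<le> U3" "U3*20 \<le> U4" "0 < U3" using a b c p unfolding U2_def U3_def U4_def by auto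
    show ?thesis unfolding e1 e2 using a' by (simp add: field_simps)
  qed
  have "(sm2*u*z0*z2 + 2*pp*n3* sm2*rho*th*zm*z2m + k* sp* sm1*th*z0*z2m) * rho < (n1* sp*u*rho*z1*z2/k) * rho"
  proof -
    have d: "(sm2*u*z0*z2 + 2*pp*n3* sm2*rho*th*zm*z2m + k* sp* sm1*th*z0*z2m) * rho
      = sm2*u*z0*z2*rho + (2*pp*n3* sm2*rho*th*zm*z2m)*rho + (k* sp* sm1*th*z0*z2m)*rho"
      by (simp only: distrib_right)
    show ?thesis unfolding d using T2 T3 T3b T4 T4b L Lb poly by linarith
  qed
  thus ?thesis using rho(1) mult_less_cancel_right_pos by blast
qed



lemma geom:
  fixes s :: complex and Ar :: real
  assumes s20: "Re s \<ge> 20" and A: "0.0471 \<le> Ar" "Ar \<le> 0.0472"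
  shows "20 \<le> norm s"
    and "(0.0471 * norm s + 1.89)/2 \<le> norm (of_real Ar * s - of_real Ar + 1)"
    and "norm (of_real Ar * s - 1) \<le> 0.0472 * norm s"
    and "norm s \<le> norm (s+1)" and "norm (s+1) \<le> norm s + 1"
    and "norm (s-1) \<le> norm s" and "norm (s-2) \<le> norm s"
    and "norm s - 1/2 \<le> norm (s - 1/2)"
proof -
  define x where "x = Re s"
  define t where "t = Im s"
  have u2: "norm s ^ 2 = x^2 + t^2" unfolding x_def t_def by (rule cmod_power2)
  have xu: "x \<le> norm s" unfolding x_def by (rule complex_Re_le_cmod)
  show u20: "20 \<le> norm s" using xu s20 x_def by simp
  have x20: "x \<ge> 20" using s20 x_def by simp
  {
    fix w :: complex and y :: real
    assume "y^2 \<le> norm w ^ 2"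
    hence "y \<le> norm w" using power2_le_imp_le[of y "norm w"] by simp
  } note sq = this
  {
    fix w :: complex and y :: real
    assume "norm w ^ 2 \<le> y^2" "0 \<le> y"
    hence "norm w \<le> y" using power2_le_imp_le[of "norm w" y] by simp
  } note sq2 = this
  have n1a: "Ar * norm s \<le> norm (of_real Ar * s - of_real Ar + 1)"
  proof (rule sq)
    have "(Ar * norm s)^2 = (Ar*x)^2 + (Ar*t)^2" using u2 by (simp add: power_mult_distrib algebra_simps)
    also have "\<dots> \<le> (Ar*x - Ar + 1)^2 + (Ar*t)^2"
    proof -
      have "0 \<le> Ar*x" using A x20 by simp
      moreover have "0 \<le> 1 - Ar" using A by simp
      ultimately have "Ar*x \<le> Ar*x - Ar + 1" by simp
      hence "(Ar*x)^2 \<le> (Ar*x - Ar + 1)^2" using \<open>0 \<le> Ar*x\<close> by (intro power_mono) auto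
      thus ?thesis by simp
    qed
    also have "\<dots> = norm (of_real Ar * s - of_real Ar + 1) ^ 2"
      by (simp add: cmod_power2 x_def t_def)
    finally show "(Ar * norm s)^2 \<le> norm (of_real Ar * s - of_real Ar + 1) ^ 2" .
  qed
  have n1b: "Ar*x - Ar + 1 \<le> norm (of_real Ar * s - of_real Ar + 1)"
    using complex_Re_le_cmod[of "of_real Ar * s - of_real Ar + 1"] by (simp add: x_def)
  have "Ar*x - Ar + 1 \<ge> 1.89"
  proof -
    have "Ar*x \<ge> Ar*20" using A x20 by (intro mult_left_mono) auto
    thus ?thesis using A by (simp; linarith)
  qed
  moreover have "0.0471 * norm s \<le> Ar * norm s" using A by (intro mult_right_mono) auto
  ultimately show "(0.0471 * norm s + 1.89)/2 \<le> norm (of_real Ar * s - of_real Ar + 1)"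
    using n1a n1b by (simp; linarith)
  show "norm (of_real Ar * s - 1) \<le> 0.0472 * norm s"
  proof -
    have "norm (of_real Ar * s - 1) ^ 2 = (Ar*x - 1)^2 + (Ar*t)^2"
      by (simp add: cmod_power2 x_def t_def)
    also have "\<dots> = (Ar * norm s)^2 + (1 - 2*Ar*x)"
      using u2 by (simp add: power2_eq_square algebra_simps)
    also have "\<dots> \<le> (Ar * norm s)^2"
    proof -
      have "Ar*x \<ge> Ar*20" using A x20 by (intro mult_left_mono) auto
      thus ?thesis using A by (simp; linarith)
    qed
    finally have "norm (of_real Ar * s - 1) \<le> Ar * norm s" using A u20 by (intro sq2) auto
    also have "\<dots> \<le> 0.0472 * norm s" using A by (intro mult_right_mono) auto
    finally show ?thesis .
  qed
  show "norm s \<le> norm (s+1)"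
  proof (rule sq)
    have "norm (s+1)^2 = (x+1)^2 + t^2" by (simp add: cmod_power2 x_def t_def)
    thus "norm s ^ 2 \<le> norm (s+1)^2" using u2 x20 by (simp add: power2_eq_square algebra_simps)
  qed
  show "norm (s+1) \<le> norm s + 1" using norm_triangle_ineq[of s 1] by simp
  show "norm (s-1) \<le> norm s"
  proof (rule sq2)
    have "norm (s-1)^2 = (x-1)^2 + t^2" by (simp add: cmod_power2 x_def t_def)
    thus "norm (s-1) ^ 2 \<le> norm s^2" using u2 x20 by (simp add: power2_eq_square algebra_simps)
  qed simp
  show "norm (s-2) \<le> norm s"
  proof (rule sq2)
    have "norm (s-2)^2 = (x-2)^2 + t^2" by (simp add: cmod_power2 x_def t_def)
    thus "norm (s-2) ^ 2 \<le> norm s^2" using u2 x20 by (simp add: power2_eq_square algebra_simps)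
  qed simp
  show "norm s - 1/2 \<le> norm (s - 1/2)" using norm_triangle_ineq2[of s "1/2"] by simp
qed



lemma norm_chi: "norm (chi_fun w) = norm w * norm (w - 1) * pi powr (- Re w / 2) * norm (Gamma (w/2)) * norm (zeta_dir w)"
proof -
  have "norm (complex_of_real pi powr (- w / 2)) = pi powr (- Re w / 2)"
    by (subst norm_powr_real_powr) auto
  thus ?thesis unfolding chi_fun_def xi_fun_def by (simp add: norm_mult)
qed

lemma zeta_near1:
  assumes "Re w \<ge> 19"
  shows "0.99 \<le> norm (zeta_dir w)" "norm (zeta_dir w) \<le> 1.01"
proof -
  have b: "norm (zeta_dir w - 1) \<le> 1/2^17" by (rule zeta_bound[OF assms])
  have "norm (1::complex) - norm (zeta_dir w) \<le> norm (1 - zeta_dir w)" by (rule norm_triangle_ineq2)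
  also have "\<dots> = norm (zeta_dir w - 1)" by (rule norm_minus_commute)
  finally show "0.99 \<le> norm (zeta_dir w)" using b by simp
  have "norm (zeta_dir w) \<le> norm (zeta_dir w - 1) + norm (1::complex)"
    using norm_triangle_ineq[of "zeta_dir w - 1" 1] by simp
  thus "norm (zeta_dir w) \<le> 1.01" using b by simp
qed

theorem proposition2:
  fixes s :: complex
  assumes "Re s \<ge> 20"
  shows "Z_fun s \<noteq> 0"
proof -
  define \<sigma> where "\<sigma> = Re s"
  define u where "u = norm s"
  define Ar where "Ar = pi/3 - 1"
  have Ar: "0.0471 \<le> Ar" "Ar \<le> 0.0472" using pi_approx unfolding Ar_def by auto
  have Aeq: "A_const = complex_of_real Ar" by (simp add: A_const_def Ar_def)
  note geo = geom[OF assms Ar]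
  have u20: "20 \<le> u" using geo(1) u_def by simp
  have s20: "\<sigma> \<ge> 20" using assms \<sigma>_def by simp
  have s0: "s \<noteq> 0" "s - 1 \<noteq> 0" "2 * s - 1 \<noteq> (0::complex)" using assms by (auto simp: complex_eq_iff)
  define a where "a = norm (Gamma (s/2))"
  define b where "b = norm (Gamma ((s+1)/2))"
  define c where "c = norm (Gamma s)"
  define d where "d = norm (Gamma (s - 1/2))"
  have a0: "a > 0" unfolding a_def using assms by (simp add: Gamma_ne0_Re)
  have b0: "b > 0" unfolding b_def using assms by (simp add: Gamma_ne0_Re)
  have c0: "c > 0" unfolding c_def using assms by (simp add: Gamma_ne0_Re)
  have d0: "d > 0" unfolding d_def using assms by (simp add: Gamma_ne0_Re)
  define rho where "rho = b / a"
  define th where "th = d / c"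
  have rho0: "rho > 0" using a0 b0 rho_def by simp
  have th0: "th \<ge> 0" using c0 d0 th_def by simp
  have brho: "b = rho * a" using a0 rho_def by simp
  have dth: "d = th * c" using c0 th_def by simp
  have gr1: "(1 - 1/(4*Re (s/2))) * norm (s/2) \<le> rho ^ 2" "rho ^ 2 \<le> norm (s/2) / (1 - 1/(4*Re (s/2)))"
  proof -
    have e: "s/2 + 1/2 = (s+1)/2" by (simp add: add_divide_distrib)
    have r: "norm (Gamma (s/2 + 1/2) / Gamma (s/2)) = rho" unfolding e rho_def a_def b_def by (simp add: norm_divide)
    have "Re (s/2) \<ge> 1" using assms by simp
    from gamma_ratio[OF this] show "(1 - 1/(4*Re (s/2))) * norm (s/2) \<le> rho ^ 2" "rho ^ 2 \<le> norm (s/2) / (1 - 1/(4*Re (s/2)))"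
      unfolding r by auto
  qed
  have ns2: "norm (s/2) = u/2" unfolding u_def by (simp add: norm_divide)
  have rho_lo: "rho^2 \<ge> 39/80*u"
  proof -
    have "1/(4*Re (s/2)) \<le> 1/40" using assms by (simp add: field_simps)
    hence "39/40 \<le> 1 - 1/(4*Re (s/2))" by simp
    hence "39/40 * (u/2) \<le> (1 - 1/(4*Re (s/2))) * norm (s/2)" unfolding ns2
      by (intro mult_right_mono) (use u20 in auto)
    thus ?thesis using gr1(1) by simp
  qed
  have rho_hi: "rho^2 \<le> 20/39*u"
  proof -
    have "1/(4*Re (s/2)) \<le> 1/40" using assms by (simp add: field_simps)
    hence h: "39/40 \<le> 1 - 1/(4*Re (s/2))" by simp
    have "norm (s/2) / (1 - 1/(4*Re (s/2))) \<le> (u/2) / (39/40)" unfolding ns2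
      using h u20 by (intro divide_left_mono mult_pos_pos) auto
    from order_trans[OF gr1(2) this] show ?thesis by simp
  qed
  have rho_le: "rho \<le> 0.161*u"
  proof (rule power2_le_imp_le)
    have "20/39*u \<le> (0.161*u)^2"
    proof -
      have "20/39*u \<le> (0.161^2*20)*u" using u20 by (intro mult_right_mono) (auto simp: power2_eq_square)
      also have "\<dots> \<le> 0.161^2*u*u" using u20 by (simp add: mult_left_mono)
      finally show ?thesis by (simp add: power2_eq_square algebra_simps)
    qed
    thus "rho^2 \<le> (0.161*u)^2" using rho_hi by linarith
  qed (use u20 in simp)
  have rth: "rho * th \<le> 3/4"
  proof -
    define R where "R = c / d"
    have e: "s - 1/2 + 1/2 = s" by simp
    have r: "norm (Gamma (s - 1/2 + 1/2) / Gamma (s - 1/2)) = R" unfolding e R_def c_def d_def by (simp add: norm_divide)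
    have "Re (s - 1/2) \<ge> 1" using assms by simp
    from gamma_ratio(1)[OF this] have g: "(1 - 1/(4*Re (s - 1/2))) * norm (s - 1/2) \<le> R^2" unfolding r .
    have "1/(4*Re (s - 1/2)) \<le> 1/78" using assms by (simp add: field_simps)
    hence h: "77/78 \<le> 1 - 1/(4*Re (s - 1/2))" by simp
    have "77/78 * (u - 1/2) \<le> (1 - 1/(4*Re (s - 1/2))) * norm (s - 1/2)"
      using h geo(8) u20 unfolding u_def by (intro mult_mono) auto
    hence R2: "77/78 * (u - 1/2) \<le> R^2" using g by linarith
    have "rho^2 \<le> (3/4*R)^2"
    proof -
      have "20/39*u \<le> 9/16 * (77/78 * (u - 1/2))" using u20 by simp
      also have "\<dots> \<le> 9/16 * R^2" using R2 by simp
      finally have "20/39*u \<le> 9/16 * R^2" .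
      moreover have "(3/4*R)^2 = 9/16 * R^2" by (simp add: power_mult_distrib power2_eq_square)
      ultimately show ?thesis using rho_hi by linarith
    qed
    moreover have "0 \<le> 3/4*R" unfolding R_def using c0 d0 by simp
    ultimately have "rho \<le> 3/4*R" by (rule power2_le_imp_le)
    hence "rho * th \<le> 3/4*R*th" using th0 by (rule mult_right_mono)
    also have "3/4*R*th = 3/4" unfolding R_def th_def using c0 d0 by simp
    finally show ?thesis .
  qed
  define P where "P = pi powr (-\<sigma>/2)"
  define Q where "Q = pi powr (-\<sigma>)"
  define k where "k = pi powr (1/2)"
  have ks: "k = sqrt pi" unfolding k_def by (rule powr_half_sqrt) simp
  have k0: "k > 0" unfolding ks by simp
  have kk: "k * k = pi" unfolding ks by simp
  have P0: "P > 0" "Q > 0" unfolding P_def Q_def by auto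
  have pw1: "pi powr (- Re (s+1) / 2) = P / k"
  proof -
    have e: "- Re (s+1) / 2 = -\<sigma>/2 + - (1/2)" unfolding \<sigma>_def by simp
    have "pi powr (- Re (s+1) / 2) = pi powr (-\<sigma>/2) * pi powr (- (1/2))" unfolding e by (rule powr_add)
    also have "\<dots> = P / k" unfolding P_def k_def powr_minus divide_inverse ..
    finally show ?thesis .
  qed
  have pw2: "pi powr (- Re (s-1) / 2) = P * k"
  proof -
    have e: "- Re (s-1) / 2 = -\<sigma>/2 + 1/2" unfolding \<sigma>_def by simp
    show ?thesis unfolding e P_def k_def by (rule powr_add)
  qed
  have pw3: "pi powr (- Re (2 * s) / 2) = Q"
  proof -
    have e: "- Re (2 * s) / 2 = -\<sigma>" unfolding \<sigma>_def by simp
    show ?thesis unfolding e Q_def ..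
  qed
  have pw4: "pi powr (- Re (2 * s - 1) / 2) = Q * k"
  proof -
    have e: "- Re (2 * s - 1) / 2 = -\<sigma> + 1/2" unfolding \<sigma>_def by simp
    show ?thesis unfolding e Q_def k_def by (rule powr_add)
  qed
  have pw0: "pi powr (- Re s / 2) = P" unfolding P_def \<sigma>_def ..
  have kb: "1.772 \<le> k" "k \<le> 1.7725"
  proof -
    have "sqrt (1.772^2) \<le> sqrt pi" using pi_approx by (subst real_sqrt_le_iff) (simp add: power2_eq_square)
    thus "1.772 \<le> k" unfolding ks by simp
    have "sqrt pi \<le> sqrt (1.7725^2)" using pi_approx by (subst real_sqrt_le_iff) (simp add: power2_eq_square)
    thus "k \<le> 1.7725" unfolding ks by simp
  qed
  have gm: "norm (Gamma ((s - 1)/2)) = 2 * b / norm (s - 1)"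
  proof -
    have nn: "(s-1)/2 \<notin> \<int>\<^sub>\<le>\<^sub>0"
    proof
      assume "(s-1)/2 \<in> \<int>\<^sub>\<le>\<^sub>0"
      then obtain j where "(s-1)/2 = - of_nat j" by (elim nonpos_Ints_cases')
      hence "Re ((s-1)/2) = - real j" by simp
      thus False using assms by simp
    qed
    have g1: "Gamma ((s-1)/2 + 1) = (s-1)/2 * Gamma ((s-1)/2)" by (rule Gamma_plus1[OF nn])
    have e: "(s-1)/2 + 1 = (s+1)/2" by (simp add: field_simps)
    have "b = norm ((s-1)/2 * Gamma ((s-1)/2))" unfolding b_def g1[unfolded e] ..
    hence "b = norm (s-1) / 2 * norm (Gamma ((s - 1)/2))" by (simp add: norm_mult norm_divide)
    thus ?thesis using s0 by (simp add: field_simps)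
  qed
  define sp where "sp = norm (s+1)"
  define sm1 where "sm1 = norm (s-1)"
  define sm2 where "sm2 = norm (s-2)"
  define s2m where "s2m = norm (2 * s - 1)"
  define n1 where "n1 = norm (A_const * s - A_const + 1)"
  define n3 where "n3 = norm (A_const * s - 1)"
  define z1 where "z1 = norm (zeta_dir (s+1))"
  define z0 where "z0 = norm (zeta_dir s)"
  define zm where "zm = norm (zeta_dir (s-1))"
  define z2 where "z2 = norm (zeta_dir (2 * s))"
  define z2m where "z2m = norm (zeta_dir (2 * s - 1))"
  have sm1p: "sm1 > 0" using s0 sm1_def by simp
  have s2mp: "s2m > 0" using s0 s2m_def by simp
  have N1: "norm (chi_fun (s+1)) = sp * u * (P/k) * b * z1"
    unfolding norm_chi pw1 sp_def u_def b_def z1_def by simp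
  have N0: "norm (chi_fun s) = u * sm1 * P * a * z0"
    unfolding norm_chi pw0 sm1_def u_def a_def z0_def by simp
  have Nm: "norm (chi_fun (s-1)) = sm1 * sm2 * (P*k) * (2*b/sm1) * zm"
  proof -
    have "s - 1 - 1 = s - 2" by simp
    thus ?thesis unfolding norm_chi pw2 gm sm1_def sm2_def zm_def by simp
  qed
  have N2: "norm (chi_fun (2 * s)) = (2*u) * s2m * Q * c * z2"
  proof -
    have "norm (2 * s) = 2 * u" unfolding u_def by (simp add: norm_mult)
    thus ?thesis unfolding norm_chi pw3 s2m_def c_def z2_def by simp
  qed
  have N2m: "norm (chi_fun (2 * s-1)) = s2m * (2 * sm1) * (Q*k) * d * z2m"
  proof -
    have h: "2 * s - 1 - 1 = 2 * (s - 1)" by simp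
    have A1: "norm (2 * s - 1 - 1) = 2 * sm1" unfolding h sm1_def norm_mult by simp
    have e2: "(2 * s - 1) / 2 = s - 1/2" by (simp add: field_simps)
    have A2: "norm (Gamma ((2 * s - 1) / 2)) = d" unfolding d_def e2 ..
    show ?thesis unfolding norm_chi pw4 A1 A2 s2m_def[symmetric] z2m_def[symmetric] by simp
  qed
  define F where "F = 2 * u * sm1 * s2m * P * Q * a * c"
  have F0: "F > 0" unfolding F_def using u20 sm1p s2mp P0 a0 c0 by simp
  define T1 where "T1 = (s - 1) * (A_const * s - A_const + 1) * chi_fun (s + 1) * chi_fun (2 * s)"
  define T2 where "T2 = (s - 2) * chi_fun s * chi_fun (2 * s)"
  define T3 where "T3 = s * (A_const * s - 1) * chi_fun (s - 1) * chi_fun (2 * s - 1)"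
  define T4 where "T4 = (s + 1) * chi_fun s * chi_fun (2 * s - 1)"
  have Zeq: "Z_fun s = T1 - T2 - T3 - T4" unfolding Z_fun_def T1_def T2_def T3_def T4_def ..
  have nT1: "norm T1 = F * (n1 * sp * u * rho * z1 * z2 / k)"
  proof -
    have "norm T1 = sm1 * n1 * (sp * u * (P/k) * b * z1) * ((2 * u) * s2m * Q * c * z2)"
      unfolding T1_def norm_mult N1 N2 sm1_def n1_def ..
    also have "\<dots> = F * (n1 * sp * u * rho * z1 * z2 / k)"
      unfolding F_def brho using k0 by (simp add: field_simps)
    finally show ?thesis .
  qed
  have nT2: "norm T2 = F * (sm2 * u * z0 * z2)"
  proof -
    have "norm T2 = sm2 * (u * sm1 * P * a * z0) * ((2 * u) * s2m * Q * c * z2)"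
      unfolding T2_def norm_mult N0 N2 sm2_def ..
    also have "\<dots> = F * (sm2 * u * z0 * z2)"
      unfolding F_def by (simp add: field_simps)
    finally show ?thesis .
  qed
  have nT3: "norm T3 = F * (2 * pi * n3 * sm2 * rho * th * zm * z2m)"
  proof -
    have "norm T3 = u * n3 * (sm1 * sm2 * (P * k) * (2 * b / sm1) * zm) * (s2m * (2 * sm1) * (Q * k) * d * z2m)"
      unfolding T3_def norm_mult Nm N2m u_def n3_def ..
    also have "\<dots> = F * (2 * (k * k) * n3 * sm2 * rho * th * zm * z2m)"
      unfolding F_def brho dth using sm1p by (simp add: field_simps)
    finally show ?thesis unfolding kk .
  qed
  have nT4: "norm T4 = F * (k * sp * sm1 * th * z0 * z2m)"
  proof -
    have "norm T4 = sp * (u * sm1 * P * a * z0) * (s2m * (2 * sm1) * (Q * k) * d * z2m)"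
      unfolding T4_def norm_mult N0 N2m sp_def ..
    also have "\<dots> = F * (k * sp * sm1 * th * z0 * z2m)"
      unfolding F_def dth by (simp add: field_simps)
    finally show ?thesis .
  qed
  have zb1: "0.99 \<le> z1" unfolding z1_def using assms by (intro zeta_near1) auto
  have zb2: "0.99 \<le> z2" "z2 \<le> 1.01" unfolding z2_def using assms by (intro zeta_near1; simp)+
  have zb0: "z0 \<le> 1.01" unfolding z0_def using assms by (intro zeta_near1) auto
  have zbm: "zm \<le> 1.01" unfolding zm_def using assms by (intro zeta_near1) auto
  have zb2m: "z2m \<le> 1.01" unfolding z2m_def using assms by (intro zeta_near1) auto
  have zpos: "0 \<le> z0" "0 \<le> zm" "0 \<le> z2m" unfolding z0_def zm_def z2m_def by simp_all
  have gn1: "(0.0471 * u + 1.89)/2 \<le> n1" unfolding n1_def Aeq u_def by (rule geo(2))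
  have gn3: "n3 \<le> 0.0472 * u" unfolding n3_def Aeq u_def by (rule geo(3))
  have gsp: "u \<le> sp" "sp \<le> u + 1" unfolding sp_def u_def by (rule geo(4), rule geo(5))
  have gsm1: "sm1 \<le> u" unfolding sm1_def u_def by (rule geo(6))
  have gsm2: "sm2 \<le> u" unfolding sm2_def u_def by (rule geo(7))
  have nonneg: "0 \<le> n3" "0 \<le> sm1" "0 \<le> sm2" unfolding n3_def sm1_def sm2_def by simp_all
  have ppb: "0 \<le> pi" "pi \<le> 3.1416" using pi_approx by simp_all
  have X: "sm2 * u * z0 * z2 + 2 * pi * n3 * sm2 * rho * th * zm * z2m + k * sp * sm1 * th * z0 * z2m
      < n1 * sp * u * rho * z1 * z2 / k"
    by (rule final_ineq[OF u20 gn1 nonneg(1) gn3 gsp nonneg(2) gsm1 nonneg(3) gsm2 rho0 rho_lo rho_le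
          th0 rth zb1 zb2 zpos(1) zb0 zpos(2) zbm zpos(3) zb2m kb ppb])
  have "norm T2 + norm T3 + norm T4 = F * (sm2 * u * z0 * z2 + 2 * pi * n3 * sm2 * rho * th * zm * z2m + k * sp * sm1 * th * z0 * z2m)"
    unfolding nT2 nT3 nT4 by (simp add: distrib_left)
  also have "\<dots> < F * (n1 * sp * u * rho * z1 * z2 / k)" using X F0 by (rule mult_strict_left_mono)
  also have "\<dots> = norm T1" using nT1 by simp
  finally have lt: "norm T2 + norm T3 + norm T4 < norm T1" .
  show ?thesis
  proof
    assume "Z_fun s = 0"
    hence "T1 = T2 + T3 + T4" unfolding Zeq by (simp add: algebra_simps)
    hence "norm T1 \<le> norm T2 + norm T3 + norm T4"
      using norm_triangle_ineq[of "T2 + T3" T4] norm_triangle_ineq[of T2 T3] by simp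
    thus False using lt by simp
  qed
qed


end
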